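(* Let $G$ be a finite group and $S\in\mathcal F(G)$. (1) If $[S]$ is an idempotent of $\mathcal C(\mathcal B(G),\mathcal F(G))$, then $\pi(S)$ is a subgroup of $G$ contained in $G'$. (2) $[1_{\mathcal F(G)}]=\mathcal B(\mathsf Z(G))$. In particular, if $g\in\mathsf Z(G)$ then $g^{[\mathrm{ord}(g)]}\sim 1_{\mathcal F(G)}$. (3) $[S]$ is the smallest element of the set of idempotents of $\mathcal C(\mathcal B(G),\mathcal F(G))$ with respect to the Rees order if and only if $\pi(S)=G'$.
   Context: Let $G$ be a finite group written multiplicatively with identity $1_G$; $G'$ is its commutator subgroup and $\mathsf Z(G)$ its center. For $G_0\subset G$, $\mathcal F(G_0)$ is the free abelian monoid with basis $G_0$; its elements are sequences $S=g_1\boldsymbol{\cdot}\ldots\boldsymbol{\cdot}g_\ell$ (operation $\boldsymbol{\cdot}$ = concatenation, identity the empty sequence $1_{\mathcal F(G)}$; $g^{[k]}$ is the sequence consisting of $k$ copies of $g$). $\pi(S)=\{g_{\tau(1)}\cdots g_{\tau(\ell)}:\tau\text{ a permutation of }[1,\ell]\}$, $\pi(1_{\mathcal F(G)})=\{1_G\}$, and $\mathcal B(G_0)=\{S\in\mathcal F(G_0):1_G\in\pi(S)\}$. For $S,S'\in\mathcal F(G)$, $S\sim S'$ means: for all $T\in\mathcal F(G)$, $S\boldsymbol{\cdot}T\in\mathcal B(G)\iff S'\boldsymbol{\cdot}T\in\mathcal B(G)$; this is a congruence, $[S]$ is the class of $S$, and $\mathcal C(\mathcal B(G),\mathcal F(G))$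 is the set of classes, a commutative semigroup written additively with $[S]+[T]=[S\boldsymbol{\cdot}T]$. The Rees order on idempotents of a commutative semigroup is $e\le f$ iff $e+f=e$. *)

theory Defs
  imports "HOL-Algebra.Algebra" "HOL-Library.Multiset"
begin

definition grp_center :: "('a, 'b) monoid_scheme \<Rightarrow> 'a set" where
  "grp_center G = {z \<in> carrier G. \<forall>x \<in> carrier G. z \<otimes>\<^bsub>G\<^esub> x = x \<otimes>\<^bsub>G\<^esub> z}"

(* F(G0): sequences (finite multisets) over G0 *)
definition seqs :: "'a set \<Rightarrow> 'a multiset set" where
  "seqs G0 = {S. set_mset S \<subseteq> G0}"

definition lprod :: "('a, 'b) monoid_scheme \<Rightarrow> 'a list \<Rightarrow> 'a" where
  "lprod G xs = foldr (\<lambda>x y. x \<otimes>\<^bsub>G\<^esub> y) xs \<one>\<^bsub>G\<^esub>"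

definition seq_prods :: "('a, 'b) monoid_scheme \<Rightarrow> 'a multiset \<Rightarrow> 'a set" where
  "seq_prods G S = {lprod G xs | xs. mset xs = S}"

definition prod_one_seqs :: "('a, 'b) monoid_scheme \<Rightarrow> 'a set \<Rightarrow> 'a multiset set" where
  "prod_one_seqs G G0 = {S \<in> seqs G0. \<one>\<^bsub>G\<^esub> \<in> seq_prods G S}"

definition seq_equiv :: "('a, 'b) monoid_scheme \<Rightarrow> 'a multiset \<Rightarrow> 'a multiset \<Rightarrow> bool" where
  "seq_equiv G S S' = (\<forall>T \<in> seqs (carrier G).
      (S + T \<in> prod_one_seqs G (carrier G)) = (S' + T \<in> prod_one_seqs G (carrier G)))"

definition seq_class :: "('a, 'b) monoid_scheme \<Rightarrow> 'a multiset \<Rightarrow> 'a multiset set" where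
  "seq_class G S = {T \<in> seqs (carrier G). seq_equiv G S T}"

definition class_semigroup :: "('a, 'b) monoid_scheme \<Rightarrow> 'a multiset set set" where
  "class_semigroup G = seq_class G ` seqs (carrier G)"

definition class_add :: "('a, 'b) monoid_scheme \<Rightarrow> 'a multiset set \<Rightarrow> 'a multiset set \<Rightarrow> 'a multiset set" where
  "class_add G A B = seq_class G ((SOME S. S \<in> A) + (SOME T. T \<in> B))"

definition class_idems :: "('a, 'b) monoid_scheme \<Rightarrow> 'a multiset set set" where
  "class_idems G = {e \<in> class_semigroup G. class_add G e e = e}"

definition rees_le :: "('a, 'b) monoid_scheme \<Rightarrow> 'a multiset set \<Rightarrow> 'a multiset set \<Rightarrow> bool" where
  "rees_le G e f = (class_add G e f = e)"

end

theory Submission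
  imports Defs
begin


lemma lprod_Nil[simp]: "lprod G [] = \<one>\<^bsub>G\<^esub>" by (simp add: lprod_def)
lemma lprod_Cons[simp]: "lprod G (x # xs) = x \<otimes>\<^bsub>G\<^esub> lprod G xs" by (simp add: lprod_def)

lemma seq_prodsI: "mset xs = S \<Longrightarrow> lprod G xs = a \<Longrightarrow> a \<in> seq_prods G S"
  unfolding seq_prods_def by auto

lemma seq_prodsE: assumes "a \<in> seq_prods G S" obtains xs where "mset xs = S" "lprod G xs = a"
  using assms unfolding seq_prods_def by auto

context group begin

lemma inv_cancel_l[simp]: "x \<in> carrier G \<Longrightarrow> y \<in> carrier G \<Longrightarrow> inv x \<otimes> (x \<otimes> y) = y"
  by (simp add: m_assoc[symmetric])
lemma inv_cancel_r[simp]: "x \<in> carrier G \<Longrightarrow> y \<in> carrier G \<Longrightarrow> x \<otimes> (inv x \<otimes> y) = y"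
  by (simp add: m_assoc[symmetric])

abbreviation "DN \<equiv> derived G (carrier G)"

lemma lprod_carrier: "set xs \<subseteq> carrier G \<Longrightarrow> lprod G xs \<in> carrier G"
  by (induction xs) auto

lemma lprod_append: "set xs \<subseteq> carrier G \<Longrightarrow> set ys \<subseteq> carrier G \<Longrightarrow>
   lprod G (xs @ ys) = lprod G xs \<otimes> lprod G ys"
  by (induction xs) (auto simp: m_assoc lprod_carrier)

lemma seqs_set: "S \<in> seqs A \<Longrightarrow> mset xs = S \<Longrightarrow> set xs \<subseteq> A"
  unfolding seqs_def by (metis mem_Collect_eq set_mset_mset)

lemma seqs_add: "S \<in> seqs A \<Longrightarrow> T \<in> seqs A \<Longrightarrow> S + T \<in> seqs A"
  unfolding seqs_def by auto

lemma seq_prods_carrier: "S \<in> seqs (carrier G) \<Longrightarrow> seq_prods G S \<subseteq> carrier G"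
  unfolding seq_prods_def using seqs_set lprod_carrier by blast

lemma seq_prods_add: "S \<in> seqs (carrier G) \<Longrightarrow> T \<in> seqs (carrier G) \<Longrightarrow>
  a \<in> seq_prods G S \<Longrightarrow> b \<in> seq_prods G T \<Longrightarrow> a \<otimes> b \<in> seq_prods G (S + T)"
proof -
  assume S: "S \<in> seqs (carrier G)" and T: "T \<in> seqs (carrier G)"
    and a: "a \<in> seq_prods G S" and b: "b \<in> seq_prods G T"
  obtain xs where xs: "mset xs = S" "a = lprod G xs" using a unfolding seq_prods_def by auto
  obtain ys where ys: "mset ys = T" "b = lprod G ys" using b unfolding seq_prods_def by auto
  have "lprod G (xs @ ys) = a \<otimes> b" using xs ys lprod_append seqs_set[OF S] seqs_set[OF T] by auto
  moreover have "mset (xs @ ys) = S + T" using xs ys by simp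
  ultimately show ?thesis by (metis seq_prodsI)
qed

lemma rot_lemma: "set a \<subseteq> carrier G \<Longrightarrow> set b \<subseteq> carrier G \<Longrightarrow> x \<in> carrier G \<Longrightarrow>
   lprod G (a @ x # b) = \<one> \<Longrightarrow> lprod G (b @ a) = inv x"
proof -
  assume a: "set a \<subseteq> carrier G" and b: "set b \<subseteq> carrier G" and x: "x \<in> carrier G"
    and e: "lprod G (a @ x # b) = \<one>"
  define A where "A = lprod G a"
  define B where "B = lprod G b"
  have AB: "A \<in> carrier G" "B \<in> carrier G" using a b lprod_carrier A_def B_def by auto
  have "A \<otimes> (x \<otimes> B) = \<one>" using e lprod_append[of a "x # b"] a b x A_def B_def by auto
  then have "(x \<otimes> B) \<otimes> A = \<one>" using inv_comm AB x by blast
  then have "x \<otimes> (B \<otimes> A) = \<one>" using AB x m_assoc by auto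
  then have "(B \<otimes> A) \<otimes> x = \<one>" using inv_comm AB x by simp
  then have "inv x = B \<otimes> A" using inv_equality AB x by simp
  thus ?thesis using lprod_append a b A_def B_def by auto
qed

lemma rot_seq: assumes S: "S \<in> seqs (carrier G)" and x: "x \<in> carrier G"
  and B: "\<one> \<in> seq_prods G (S + {#x#})"
  shows "inv x \<in> seq_prods G S"
proof -
  obtain w where w: "mset w = S + {#x#}" "lprod G w = \<one>" using B unfolding seq_prods_def by auto
  have "x \<in> set w" using w by (metis add_mset_add_single set_mset_mset union_single_eq_member)
  then obtain a b where ab: "w = a @ x # b" by (meson split_list)
  have wc: "set w \<subseteq> carrier G" using w(1) S x unfolding seqs_def
    by (metis Un_insert_right insert_subset set_mset_add_mset_insert set_mset_mset set_mset_union
        sup_bot.right_neutral add_mset_add_single mem_Collect_eq)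
  have "lprod G (b @ a) = inv x" using rot_lemma[of a b x] ab wc w x by auto
  moreover have "mset (b @ a) = S" using w ab by (simp add: add.commute)
  ultimately show ?thesis by (metis seq_prodsI)
qed

end

context group begin

lemma seq_equiv_refl: "seq_equiv G S S" unfolding seq_equiv_def by auto
lemma seq_equiv_sym: "seq_equiv G S T \<Longrightarrow> seq_equiv G T S" unfolding seq_equiv_def by auto
lemma seq_equiv_trans: "seq_equiv G S T \<Longrightarrow> seq_equiv G T U \<Longrightarrow> seq_equiv G S U"
  unfolding seq_equiv_def by auto

lemma seq_class_eq: "seq_equiv G S T \<Longrightarrow> seq_class G S = seq_class G T"
  unfolding seq_class_def using seq_equiv_sym seq_equiv_trans by blast

lemma seq_class_eqD: "T \<in> seqs (carrier G) \<Longrightarrow> seq_class G S = seq_class G T \<Longrightarrow> seq_equiv G S T"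
  unfolding seq_class_def using seq_equiv_refl by blast

lemma seq_equiv_cong: assumes "S \<in> seqs (carrier G)" "S' \<in> seqs (carrier G)"
  "T \<in> seqs (carrier G)" "T' \<in> seqs (carrier G)" "seq_equiv G S S'" "seq_equiv G T T'"
  shows "seq_equiv G (S + T) (S' + T')"
  unfolding seq_equiv_def
proof (intro ballI)
  fix U assume U: "U \<in> seqs (carrier G)"
  have "(S + T + U \<in> prod_one_seqs G (carrier G)) = (S' + (T + U) \<in> prod_one_seqs G (carrier G))"
    using assms(5) seqs_add[OF assms(3) U] unfolding seq_equiv_def by (simp add: add.assoc)
  also have "\<dots> = (T + (S' + U) \<in> prod_one_seqs G (carrier G))" by (simp add: add_ac)
  also have "\<dots> = (T' + (S' + U) \<in> prod_one_seqs G (carrier G))"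
    using assms(6) seqs_add[OF assms(2) U] unfolding seq_equiv_def by simp
  finally show "(S + T + U \<in> prod_one_seqs G (carrier G)) = (S' + T' + U \<in> prod_one_seqs G (carrier G))"
    by (simp add: add_ac)
qed

lemma class_add_eq: assumes "S \<in> seqs (carrier G)" "T \<in> seqs (carrier G)"
  shows "class_add G (seq_class G S) (seq_class G T) = seq_class G (S + T)"
proof -
  have sS: "S \<in> seq_class G S" "T \<in> seq_class G T" using assms seq_equiv_refl unfolding seq_class_def by auto
  define S0 where "S0 = (SOME V. V \<in> seq_class G S)"
  define T0 where "T0 = (SOME V. V \<in> seq_class G T)"
  have "S0 \<in> seq_class G S" "T0 \<in> seq_class G T" unfolding S0_def T0_def using sS by (metis someI)+
  then have "S0 \<in> seqs (carrier G)" "T0 \<in> seqs (carrier G)" "seq_equiv G S0 S" "seq_equiv G T0 T"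
    unfolding seq_class_def using seq_equiv_sym by auto
  then have "seq_equiv G (S0 + T0) (S + T)" using seq_equiv_cong assms by blast
  then show ?thesis unfolding class_add_def S0_def[symmetric] T0_def[symmetric] using seq_class_eq by blast
qed

lemma idem_iff: assumes "S \<in> seqs (carrier G)"
  shows "seq_class G S \<in> class_idems G \<longleftrightarrow> seq_equiv G (S + S) S"
proof -
  have "seq_class G S \<in> class_semigroup G" using assms unfolding class_semigroup_def by blast
  then have "seq_class G S \<in> class_idems G \<longleftrightarrow> seq_class G (S + S) = seq_class G S"
    unfolding class_idems_def using class_add_eq[OF assms assms] by auto
  also have "\<dots> \<longleftrightarrow> seq_equiv G (S + S) S"
    using seq_class_eq seq_class_eqD[OF assms] by blast
  finally show ?thesis .
qed

lemma idems_form: "f \<in> class_idems G \<Longrightarrow> \<exists>T \<in> seqs (carrier G). f = seq_class G T \<and> seq_equiv G (T + T) T"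
  using idem_iff unfolding class_idems_def class_semigroup_def by blast

lemma prod_one_iff: "S \<in> seqs (carrier G) \<Longrightarrow> S \<in> prod_one_seqs G (carrier G) \<longleftrightarrow> \<one> \<in> seq_prods G S"
  unfolding prod_one_seqs_def by auto

lemma DN_normal: "DN \<lhd> G" by (rule derived_self_is_normal)

lemma comm_in_DN: "a \<in> carrier G \<Longrightarrow> b \<in> carrier G \<Longrightarrow> a \<otimes> b \<otimes> inv a \<otimes> inv b \<in> DN"
  unfolding derived_def by (rule generate.incl) blast

lemma perm_DN: "mset xs = mset ys \<Longrightarrow> set xs \<subseteq> carrier G \<Longrightarrow> lprod G xs \<otimes> inv (lprod G ys) \<in> DN"
proof (induction xs arbitrary: ys)
  case Nil
  then show ?case using subgroup.one_closed[OF normal_imp_subgroup[OF DN_normal]] by simp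
next
  case (Cons x xs)
  have ysc: "set ys \<subseteq> carrier G" using Cons.prems by (metis set_mset_mset)
  have "x \<in> set ys" using Cons.prems(1) by (metis list.set_intros(1) set_mset_mset)
  then obtain y1 y2 where ys: "ys = y1 @ x # y2" by (meson split_list)
  have c: "x \<in> carrier G" "set xs \<subseteq> carrier G" "set y1 \<subseteq> carrier G" "set y2 \<subseteq> carrier G"
    using Cons.prems ys ysc by auto
  have "mset xs = mset (y1 @ y2)" using Cons.prems(1) ys by simp
  then have IH: "lprod G xs \<otimes> inv (lprod G (y1 @ y2)) \<in> DN" using Cons.IH c by blast
  define A where "A = lprod G y1"
  define B where "B = lprod G y2"
  define Xp where "Xp = lprod G xs"
  have abc: "A \<in> carrier G" "B \<in> carrier G" "Xp \<in> carrier G" using c lprod_carrier A_def B_def Xp_def by auto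
  have IH': "Xp \<otimes> inv (A \<otimes> B) \<in> DN" using IH lprod_append c A_def B_def Xp_def by simp
  have ly: "lprod G ys = A \<otimes> (x \<otimes> B)" using ys lprod_append c A_def B_def by simp
  have e1: "x \<otimes> (Xp \<otimes> inv (A \<otimes> B)) \<otimes> inv x \<in> DN"
    using normal.inv_op_closed2[OF DN_normal c(1) IH'] .
  have e2: "x \<otimes> A \<otimes> inv x \<otimes> inv A \<in> DN" using comm_in_DN c(1) abc by blast
  have "(x \<otimes> (Xp \<otimes> inv (A \<otimes> B)) \<otimes> inv x) \<otimes> (x \<otimes> A \<otimes> inv x \<otimes> inv A) \<in> DN"
    using e1 e2 subgroup.m_closed[OF normal_imp_subgroup[OF DN_normal]] by blast
  moreover have "(x \<otimes> (Xp \<otimes> inv (A \<otimes> B)) \<otimes> inv x) \<otimes> (x \<otimes> A \<otimes> inv x \<otimes> inv A)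
      = (x \<otimes> Xp) \<otimes> inv (A \<otimes> (x \<otimes> B))"
    using abc c(1) by (simp add: m_assoc inv_mult_group)
  ultimately show ?case using ly Xp_def by simp
qed

lemma perm_DN': "mset xs = mset ys \<Longrightarrow> set xs \<subseteq> carrier G \<Longrightarrow> lprod G xs \<in> DN \<Longrightarrow> lprod G ys \<in> DN"
proof -
  assume a: "mset xs = mset ys" "set xs \<subseteq> carrier G" "lprod G xs \<in> DN"
  have ysc: "set ys \<subseteq> carrier G" using a by (metis set_mset_mset)
  interpret N: subgroup DN G using normal_imp_subgroup[OF DN_normal] .
  have "lprod G xs \<otimes> inv (lprod G ys) \<in> DN" using perm_DN a by blast
  then have "inv (lprod G xs) \<otimes> (lprod G xs \<otimes> inv (lprod G ys)) \<in> DN" using a(3) by auto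
  then have "inv (lprod G ys) \<in> DN" using lprod_carrier a ysc by (simp add: m_assoc[symmetric])
  then show ?thesis using lprod_carrier ysc by (metis N.m_inv_closed inv_inv)
qed

end

context group begin

lemma finite_closed_subgroup:
  assumes fin: "finite (carrier G)" and H: "H \<subseteq> carrier G" "H \<noteq> {}"
    and cl: "\<And>a b. a \<in> H \<Longrightarrow> b \<in> H \<Longrightarrow> a \<otimes> b \<in> H"
  shows "subgroup H G"
proof -
  have pw: "a [^] Suc n \<in> H" if a: "a \<in> H" for a n
  proof (induction n)
    case 0
    then show ?case using a H(1) by auto
  next
    case (Suc n)
    have "a [^] Suc (Suc n) = a [^] Suc n \<otimes> a" by (rule nat_pow_Suc)
    then show ?case using cl[OF Suc a] by simp
  qed
  have one: "\<one> \<in> H"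
  proof -
    obtain a where a: "a \<in> H" using H by auto
    have ac: "a \<in> carrier G" using a H by auto
    obtain k where "ord a = Suc k" using ord_ge_1[OF fin ac] by (metis Suc_le_D One_nat_def)
    then show ?thesis using pw[OF a, of k] pow_ord_eq_1[OF ac] by simp
  qed
  have inv: "inv a \<in> H" if a: "a \<in> H" for a
  proof -
    have ac: "a \<in> carrier G" using a H by auto
    obtain k where k: "ord a = Suc k" using ord_ge_1[OF fin ac] by (metis Suc_le_D One_nat_def)
    have "a [^] k \<otimes> a = \<one>" by (metis nat_pow_Suc pow_ord_eq_1 ac k)
    then have "inv a = a [^] k" using inv_equality ac by simp
    moreover have "a [^] k \<in> H" using one pw[OF a] by (cases k) auto
    ultimately show ?thesis by simp
  qed
  show ?thesis by (rule subgroup.intro) (use H(1) cl one inv in auto)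
qed

lemma part1: assumes S: "S \<in> seqs (carrier G)" and fin: "finite (carrier G)"
  and E: "seq_equiv G (S + S) S"
  shows "subgroup (seq_prods G S) G \<and> seq_prods G S \<subseteq> DN"
proof -
  have sub: "seq_prods G S \<subseteq> carrier G" using seq_prods_carrier[OF S] .
  obtain w where w: "mset w = S" by (meson ex_mset)
  have ne: "seq_prods G S \<noteq> {}" using w unfolding seq_prods_def by auto
  have cl: "a \<otimes> b \<in> seq_prods G S" if a: "a \<in> seq_prods G S" and b: "b \<in> seq_prods G S" for a b
  proof -
    define x where "x = a \<otimes> b"
    have xc: "x \<in> carrier G" using a b sub x_def by auto
    have ix: "inv x \<in> carrier G" using xc by simp
    have T: "{#inv x#} \<in> seqs (carrier G)" using ix unfolding seqs_def by auto
    have "x \<in> seq_prods G (S + S)" using seq_prods_add[OF S S a b] x_def by simp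
    moreover have "inv x \<in> seq_prods G {#inv x#}" unfolding seq_prods_def
      using ix by (auto intro!: exI[of _ "[inv x]"])
    ultimately have "x \<otimes> inv x \<in> seq_prods G (S + S + {#inv x#})"
      using seq_prods_add[OF seqs_add[OF S S] T] by blast
    then have "\<one> \<in> seq_prods G (S + S + {#inv x#})" using xc by simp
    then have "S + S + {#inv x#} \<in> prod_one_seqs G (carrier G)"
      using prod_one_iff seqs_add[OF seqs_add[OF S S] T] by blast
    then have "S + {#inv x#} \<in> prod_one_seqs G (carrier G)" using E T unfolding seq_equiv_def by blast
    then have "\<one> \<in> seq_prods G (S + {#inv x#})" unfolding prod_one_seqs_def by auto
    then have "inv (inv x) \<in> seq_prods G S" using rot_seq[OF S ix] by blast
    then show ?thesis using xc x_def by simp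
  qed
  have sg: "subgroup (seq_prods G S) G" using finite_closed_subgroup[OF fin sub ne] cl by blast
  have "\<one> \<in> seq_prods G S" using subgroup.one_closed[OF sg] .
  then obtain v where v: "mset v = S" "lprod G v = \<one>" unfolding seq_prods_def by auto
  have "y \<in> DN" if ym: "y \<in> seq_prods G S" for y
  proof -
    obtain u where u: "mset u = S" "y = lprod G u" using seq_prodsE[OF ym] by metis
    have "\<one> \<in> DN" using subgroup.one_closed[OF normal_imp_subgroup[OF DN_normal]] .
    then show ?thesis using perm_DN'[of v u] v u seqs_set[OF S] by auto
  qed
  then show ?thesis using sg by blast
qed

end

context group begin

abbreviation "ZG \<equiv> grp_center G"

lemma ZG_carrier: "ZG \<subseteq> carrier G" unfolding grp_center_def by auto

lemma central_extract: "x \<in> ZG \<Longrightarrow> x \<in> set w \<Longrightarrow> set w \<subseteq> carrier G \<Longrightarrow>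
   lprod G w = x \<otimes> lprod G (remove1 x w)"
proof (induction w)
  case Nil then show ?case by simp
next
  case (Cons y ws)
  show ?case
  proof (cases "y = x")
    case True then show ?thesis by simp
  next
    case False
    then have "x \<in> set ws" using Cons by simp
    then have "lprod G ws = x \<otimes> lprod G (remove1 x ws)" using Cons by simp
    moreover have "set (remove1 x ws) \<subseteq> carrier G" using Cons.prems(3) by (meson dual_order.trans set_remove1_subset set_subset_Cons)
    moreover have comm: "y \<otimes> x = x \<otimes> y" using Cons.prems unfolding grp_center_def by auto
    moreover have xc: "x \<in> carrier G" "y \<in> carrier G" using Cons.prems ZG_carrier by auto
    moreover have rc: "lprod G (remove1 x ws) \<in> carrier G"
      using Cons.prems(3) lprod_carrier by (meson dual_order.trans set_remove1_subset set_subset_Cons)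
    ultimately have "y \<otimes> (x \<otimes> lprod G (remove1 x ws)) = x \<otimes> (y \<otimes> lprod G (remove1 x ws))"
      by (metis m_assoc)
    then show ?thesis using False \<open>lprod G ws = x \<otimes> lprod G (remove1 x ws)\<close> by simp
  qed
qed

lemma central_perm: "set t \<subseteq> ZG \<Longrightarrow> mset t = mset t' \<Longrightarrow> lprod G t = lprod G t'"
proof (induction t arbitrary: t')
  case Nil then show ?case by simp
next
  case (Cons x xs)
  have xin: "x \<in> set t'" using Cons.prems(2) by (metis list.set_intros(1) set_mset_mset)
  have t'c: "set t' \<subseteq> carrier G" using Cons.prems ZG_carrier by (metis order.trans set_mset_mset)
  have "lprod G t' = x \<otimes> lprod G (remove1 x t')" using central_extract Cons.prems xin t'c by simp
  moreover have "mset xs = mset (remove1 x t')" using Cons.prems(2) by (metis add_mset_remove_trivial mset.simps(2) mset_remove1)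
  moreover have "set xs \<subseteq> ZG" using Cons.prems by simp
  ultimately show ?case using Cons.IH[of "remove1 x t'"] by simp
qed

lemma central_split: "set_mset T \<subseteq> ZG \<Longrightarrow> mset w = T + U \<Longrightarrow> set w \<subseteq> carrier G \<Longrightarrow>
   \<exists>t u. mset t = T \<and> mset u = U \<and> lprod G w = lprod G t \<otimes> lprod G u"
proof (induction T arbitrary: w)
  case empty
  then show ?case using lprod_carrier by (intro exI[of _ "[]"] exI[of _ w]) auto
next
  case (add x T)
  have xZ: "x \<in> ZG" using add.prems by auto
  have xin: "x \<in> set w" using add.prems(2) by (metis set_mset_mset union_iff union_single_eq_member add_mset_add_single)
  have e: "lprod G w = x \<otimes> lprod G (remove1 x w)" using central_extract xZ xin add.prems by blast
  have m: "mset (remove1 x w) = T + U" using add.prems(2) by simp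
  have rc: "set (remove1 x w) \<subseteq> carrier G" using add.prems(3) by (meson order.trans set_remove1_subset)
  obtain t u where tu: "mset t = T" "mset u = U" "lprod G (remove1 x w) = lprod G t \<otimes> lprod G u"
    using add.IH[OF _ m rc] add.prems(1) by auto
  have tc: "set t \<subseteq> carrier G" "set u \<subseteq> carrier G" using tu m rc
    by (metis mset_subset_eqD mset_subset_eq_add_left mset_subset_eq_add_right set_mset_mset subset_iff)+
  show ?case
    using tu e xZ ZG_carrier tc lprod_carrier
    by (intro exI[of _ "x # t"] exI[of _ u]) (auto simp: m_assoc)
qed

lemma mset_two: "mset u = {#x, y#} \<Longrightarrow> u = [x, y] \<or> u = [y, x]"
proof -
  assume a: "mset u = {#x, y#}"
  then have "length u = 2" by (metis size_mset size_add_mset size_empty numeral_2_eq_2 One_nat_def)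
  then obtain p q where u: "u = [p, q]" by (auto simp: numeral_2_eq_2 length_Suc_conv)
  then show ?thesis using a by (auto simp: add_eq_conv_ex)
qed

lemma empty_B: "{#} \<in> prod_one_seqs G A"
  unfolding prod_one_seqs_def seqs_def seq_prods_def by (auto intro!: exI[of _ "[]"])

end

context group begin

lemma comm_from: assumes g: "g \<in> carrier G" and x: "x \<in> carrier G"
  and e: "x \<otimes> (g \<otimes> inv x \<otimes> inv g) = \<one>" shows "g \<otimes> x = x \<otimes> g"
proof -
  have "(x \<otimes> g) \<otimes> inv (g \<otimes> x) = \<one>" using e g x by (simp add: m_assoc inv_mult_group)
  then have "x \<otimes> g = \<one> \<otimes> (g \<otimes> x)" using inv_solve_right' g x by simp
  then show ?thesis using g x by simp
qed

lemma part2a: "finite (carrier G) \<Longrightarrow> seq_class G {#} = prod_one_seqs G ZG"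
proof (intro equalityI subsetI)
  fix T assume "T \<in> seq_class G {#}"
  then have T: "T \<in> seqs (carrier G)" and E: "seq_equiv G {#} T" unfolding seq_class_def by auto
  have "{#} + {#} \<in> prod_one_seqs G (carrier G)" using empty_B by simp
  moreover have "{#} \<in> seqs (carrier G)" unfolding seqs_def by simp
  ultimately have "T + {#} \<in> prod_one_seqs G (carrier G)" using E unfolding seq_equiv_def
    by blast
  then have one: "\<one> \<in> seq_prods G T" unfolding prod_one_seqs_def by simp
  have cen: "g \<in> ZG" if gT: "g \<in># T" for g
  proof -
    have gc: "g \<in> carrier G" using gT T unfolding seqs_def by auto
    have "g \<otimes> x = x \<otimes> g" if xc: "x \<in> carrier G" for x
    proof (rule ccontr)
      assume ne: "g \<otimes> x \<noteq> x \<otimes> g"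
      define y where "y = g \<otimes> inv x \<otimes> inv g"
      have yc: "y \<in> carrier G" using gc xc y_def by simp
      obtain w where w: "mset w = T" "lprod G w = \<one>" using one unfolding seq_prods_def by auto
      have wc: "set w \<subseteq> carrier G" using seqs_set[OF T w(1)] .
      have "g \<in> set w" using w gT by auto
      then obtain a b where ab: "w = a @ g # b" by (meson split_list)
      have abc: "set a \<subseteq> carrier G" "set b \<subseteq> carrier G" using ab wc by auto
      have ba: "lprod G (b @ a) = inv g" using rot_lemma abc gc w ab by simp
      define L where "L = g # x # (b @ a) @ [y]"
      have "lprod G L = g \<otimes> (x \<otimes> (lprod G (b @ a) \<otimes> y))"
        unfolding L_def using lprod_append[of "b @ a" "[y]"] abc yc by simp
      also have "\<dots> = \<one>" unfolding ba y_def using gc xc by (simp add: m_assoc)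
      finally have L1: "lprod G L = \<one>" .
      have "mset L = T + {#x, y#}" unfolding L_def using w(1) ab by (simp add: add.commute)
      then have "\<one> \<in> seq_prods G (T + {#x, y#})" using L1 by (metis seq_prodsI)
      moreover have U: "{#x, y#} \<in> seqs (carrier G)" using xc yc unfolding seqs_def by auto
      ultimately have "T + {#x, y#} \<in> prod_one_seqs G (carrier G)"
        using prod_one_iff seqs_add[OF T U] by blast
      then have "{#} + {#x, y#} \<in> prod_one_seqs G (carrier G)" using E U unfolding seq_equiv_def by blast
      then obtain u where u: "mset u = {#x, y#}" "lprod G u = \<one>"
        unfolding prod_one_seqs_def seq_prods_def by auto
      then have "x \<otimes> y = \<one> \<or> y \<otimes> x = \<one>" using mset_two[OF u(1)] xc yc by auto
      then have "x \<otimes> y = \<one>" using inv_comm xc yc by blast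
      then have "g \<otimes> x = x \<otimes> g" using comm_from gc xc y_def by blast
      then show False using ne by simp
    qed
    then show ?thesis using gc unfolding grp_center_def by auto
  qed
  show "T \<in> prod_one_seqs G ZG" using one cen unfolding prod_one_seqs_def seqs_def by auto
next
  fix T assume TB: "T \<in> prod_one_seqs G ZG"
  then have TZ: "set_mset T \<subseteq> ZG" and one: "\<one> \<in> seq_prods G T"
    unfolding prod_one_seqs_def seqs_def by auto
  have T: "T \<in> seqs (carrier G)" using TZ ZG_carrier unfolding seqs_def by auto
  obtain t0 where t0: "mset t0 = T" "lprod G t0 = \<one>" using one unfolding seq_prods_def by auto
  have allone: "lprod G t = \<one>" if "mset t = T" for t
    using central_perm[of t0 t] t0 that TZ by (metis set_mset_mset)
  have "seq_equiv G {#} T" unfolding seq_equiv_def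
  proof (intro ballI)
    fix U assume U: "U \<in> seqs (carrier G)"
    show "({#} + U \<in> prod_one_seqs G (carrier G)) = (T + U \<in> prod_one_seqs G (carrier G))"
    proof
      assume "{#} + U \<in> prod_one_seqs G (carrier G)"
      then have "\<one> \<in> seq_prods G U" unfolding prod_one_seqs_def by simp
      then have "\<one> \<otimes> \<one> \<in> seq_prods G (T + U)" using seq_prods_add[OF T U one] by blast
      then show "T + U \<in> prod_one_seqs G (carrier G)" using prod_one_iff seqs_add[OF T U] by simp
    next
      assume "T + U \<in> prod_one_seqs G (carrier G)"
      then obtain w where w: "mset w = T + U" "lprod G w = \<one>"
        unfolding prod_one_seqs_def seq_prods_def by auto
      have wc: "set w \<subseteq> carrier G" using seqs_set[OF seqs_add[OF T U] w(1)] .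
      obtain t u where tu: "mset t = T" "mset u = U" "lprod G w = lprod G t \<otimes> lprod G u"
        using central_split[OF TZ w(1) wc] by blast
      have "lprod G u = \<one>" using tu w allone lprod_carrier seqs_set[OF U tu(2)] by simp
      then have "\<one> \<in> seq_prods G U" using tu by (metis seq_prodsI)
      then show "{#} + U \<in> prod_one_seqs G (carrier G)" using prod_one_iff U by simp
    qed
  qed
  then show "T \<in> seq_class G {#}" using T unfolding seq_class_def by simp
qed

lemma lprod_replicate: "g \<in> carrier G \<Longrightarrow> lprod G (replicate n g) = g [^] n"
  apply (induction n) apply simp by (metis lprod_Cons replicate_Suc nat_pow_Suc2)

lemma part2b: assumes fin: "finite (carrier G)" and g: "g \<in> ZG"
  shows "seq_equiv G (replicate_mset (ord g) g) {#}"
proof -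
  have gc: "g \<in> carrier G" using g ZG_carrier by auto
  have "replicate_mset (ord g) g \<in> prod_one_seqs G ZG"
    unfolding prod_one_seqs_def seqs_def seq_prods_def
    using g gc lprod_replicate[OF gc, of "ord g"]
    by (auto intro!: exI[of _ "replicate (ord g) g"])
  then have "replicate_mset (ord g) g \<in> seq_class G {#}" using part2a[OF fin] by simp
  then show ?thesis unfolding seq_class_def using seq_equiv_sym by auto
qed

end

context group begin

lemma ord_exists: "\<exists>u. mset u = U" by (meson ex_mset)

lemma shiftDN: assumes T: "T \<in> seqs (carrier G)" and U: "U \<in> seqs (carrier G)"
  and TD: "seq_prods G T \<subseteq> DN"
  shows "(\<exists>v. mset v = T + U \<and> lprod G v \<in> DN) \<longleftrightarrow> (\<exists>u. mset u = U \<and> lprod G u \<in> DN)"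
proof -
  interpret N: subgroup DN G using normal_imp_subgroup[OF DN_normal] .
  obtain t where t: "mset t = T" using ord_exists by blast
  have tc: "set t \<subseteq> carrier G" using seqs_set[OF T t] .
  have tD: "lprod G t \<in> DN" using TD seq_prodsI[OF t refl] by blast
  show ?thesis
  proof
    assume "\<exists>v. mset v = T + U \<and> lprod G v \<in> DN"
    then obtain v where v: "mset v = T + U" "lprod G v \<in> DN" by blast
    obtain u where u: "mset u = U" using ord_exists by blast
    have uc: "set u \<subseteq> carrier G" using seqs_set[OF U u] .
    have vc: "set v \<subseteq> carrier G" using seqs_set[OF seqs_add[OF T U] v(1)] .
    have "lprod G (t @ u) \<in> DN" using perm_DN'[of v "t @ u"] v vc t u by simp
    then have "lprod G t \<otimes> lprod G u \<in> DN" using lprod_append tc uc by simp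
    then have "inv (lprod G t) \<otimes> (lprod G t \<otimes> lprod G u) \<in> DN" using tD by auto
    then have "lprod G u \<in> DN" using lprod_carrier tc uc by simp
    then show "\<exists>u. mset u = U \<and> lprod G u \<in> DN" using u by blast
  next
    assume "\<exists>u. mset u = U \<and> lprod G u \<in> DN"
    then obtain u where u: "mset u = U" "lprod G u \<in> DN" by blast
    have uc: "set u \<subseteq> carrier G" using seqs_set[OF U u(1)] .
    have "lprod G (t @ u) \<in> DN" using lprod_append tc uc tD u by simp
    moreover have "mset (t @ u) = T + U" using t u by simp
    ultimately show "\<exists>v. mset v = T + U \<and> lprod G v \<in> DN" by blast
  qed
qed

lemma charDN: assumes S: "S \<in> seqs (carrier G)" and SD: "seq_prods G S = DN"
  and U: "U \<in> seqs (carrier G)"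
  shows "S + U \<in> prod_one_seqs G (carrier G) \<longleftrightarrow> (\<exists>u. mset u = U \<and> lprod G u \<in> DN)"
proof -
  interpret N: subgroup DN G using normal_imp_subgroup[OF DN_normal] .
  have "S + U \<in> prod_one_seqs G (carrier G) \<longleftrightarrow> (\<exists>v. mset v = S + U \<and> lprod G v \<in> DN)"
  proof
    assume "S + U \<in> prod_one_seqs G (carrier G)"
    then have "\<one> \<in> seq_prods G (S + U)" using prod_one_iff seqs_add[OF S U] by blast
    then show "\<exists>v. mset v = S + U \<and> lprod G v \<in> DN" by (metis seq_prodsE N.one_closed)
  next
    assume "\<exists>v. mset v = S + U \<and> lprod G v \<in> DN"
    then have "\<exists>u. mset u = U \<and> lprod G u \<in> DN" using shiftDN[OF S U] SD by blast
    then obtain u where u: "mset u = U" "lprod G u \<in> DN" by blast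
    have uc: "set u \<subseteq> carrier G" using seqs_set[OF U u(1)] .
    have "inv (lprod G u) \<in> seq_prods G S" using SD u by simp
    then obtain s where s: "mset s = S" "lprod G s = inv (lprod G u)" by (metis seq_prodsE)
    have sc: "set s \<subseteq> carrier G" using seqs_set[OF S s(1)] .
    have "lprod G (s @ u) = \<one>" using lprod_append sc uc s lprod_carrier by simp
    moreover have "mset (s @ u) = S + U" using s u by simp
    ultimately have "\<one> \<in> seq_prods G (S + U)" by (metis seq_prodsI)
    then show "S + U \<in> prod_one_seqs G (carrier G)" using prod_one_iff seqs_add[OF S U] by blast
  qed
  also have "\<dots> \<longleftrightarrow> (\<exists>u. mset u = U \<and> lprod G u \<in> DN)" using shiftDN[OF S U] SD by blast
  finally show ?thesis .
qed

lemma absorbDN: assumes S: "S \<in> seqs (carrier G)" and SD: "seq_prods G S = DN"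
  and T: "T \<in> seqs (carrier G)" and TD: "seq_prods G T \<subseteq> DN"
  shows "seq_equiv G (S + T) S"
  unfolding seq_equiv_def
proof (intro ballI)
  fix U assume U: "U \<in> seqs (carrier G)"
  have "S + T + U \<in> prod_one_seqs G (carrier G) \<longleftrightarrow> S + (T + U) \<in> prod_one_seqs G (carrier G)"
    by (simp add: add.assoc)
  also have "\<dots> \<longleftrightarrow> (\<exists>v. mset v = T + U \<and> lprod G v \<in> DN)" using charDN[OF S SD seqs_add[OF T U]] .
  also have "\<dots> \<longleftrightarrow> (\<exists>u. mset u = U \<and> lprod G u \<in> DN)" using shiftDN[OF T U TD] .
  also have "\<dots> \<longleftrightarrow> S + U \<in> prod_one_seqs G (carrier G)" using charDN[OF S SD U] by simp
  finally show "(S + T + U \<in> prod_one_seqs G (carrier G)) = (S + U \<in> prod_one_seqs G (carrier G))" .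
qed

lemma gen_seq: "h \<in> generate G (derived_set G (carrier G)) \<Longrightarrow>
  \<exists>T \<in> seqs (carrier G). \<one> \<in> seq_prods G T \<and> h \<in> seq_prods G T"
proof (induction rule: generate.induct)
  case one
  have "{#} \<in> seqs (carrier G)" unfolding seqs_def by simp
  moreover have "\<one> \<in> seq_prods G {#}" by (rule seq_prodsI[of "[]"]) auto
  ultimately show ?case by blast
next
  case (incl h)
  then obtain a b where ab: "a \<in> carrier G" "b \<in> carrier G" "h = a \<otimes> b \<otimes> inv a \<otimes> inv b" by blast
  let ?T = "mset [a, b, inv a, inv b]"
  have "?T \<in> seqs (carrier G)" unfolding seqs_def using ab by auto
  moreover have "\<one> \<in> seq_prods G ?T" using ab by (intro seq_prodsI[of "[a, inv a, b, inv b]"]) auto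
  moreover have "h \<in> seq_prods G ?T" using ab by (intro seq_prodsI[of "[a, b, inv a, inv b]"]) (auto simp: m_assoc)
  ultimately show ?case by blast
next
  case (inv h)
  then obtain a b where ab: "a \<in> carrier G" "b \<in> carrier G" "h = a \<otimes> b \<otimes> inv a \<otimes> inv b" by blast
  let ?T = "mset [a, b, inv a, inv b]"
  have "?T \<in> seqs (carrier G)" unfolding seqs_def using ab by auto
  moreover have "\<one> \<in> seq_prods G ?T" using ab by (intro seq_prodsI[of "[a, inv a, b, inv b]"]) auto
  moreover have "inv h \<in> seq_prods G ?T" using ab
    by (intro seq_prodsI[of "[b, a, inv b, inv a]"]) (auto simp: m_assoc inv_mult_group)
  ultimately show ?case by blast
next
  case (eng h1 h2)
  then obtain T1 T2 where T: "T1 \<in> seqs (carrier G)" "T2 \<in> seqs (carrier G)"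
    "\<one> \<in> seq_prods G T1" "h1 \<in> seq_prods G T1" "\<one> \<in> seq_prods G T2" "h2 \<in> seq_prods G T2" by blast
  have "\<one> \<otimes> \<one> \<in> seq_prods G (T1 + T2)" using seq_prods_add T by blast
  moreover have "h1 \<otimes> h2 \<in> seq_prods G (T1 + T2)" using seq_prods_add T by blast
  ultimately show ?case using seqs_add[OF T(1,2)] by auto
qed

lemma big_seq: assumes fin: "finite (carrier G)"
  shows "\<exists>T \<in> seqs (carrier G). seq_prods G T = DN"
proof -
  have DNc: "DN \<subseteq> carrier G" using derived_in_carrier by simp
  have "finite F \<Longrightarrow> F \<subseteq> DN \<Longrightarrow> \<exists>T \<in> seqs (carrier G). \<one> \<in> seq_prods G T \<and> F \<subseteq> seq_prods G T" for F
  proof (induction F rule: finite_induct)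
    case empty
    have "{#} \<in> seqs (carrier G)" unfolding seqs_def by simp
    moreover have "\<one> \<in> seq_prods G {#}" by (rule seq_prodsI[of "[]"]) auto
    ultimately show ?case by blast
  next
    case (insert h F)
    then obtain T1 where T1: "T1 \<in> seqs (carrier G)" "\<one> \<in> seq_prods G T1" "F \<subseteq> seq_prods G T1" by auto
    have "h \<in> generate G (derived_set G (carrier G))" using insert.prems unfolding derived_def by auto
    then obtain T2 where T2: "T2 \<in> seqs (carrier G)" "\<one> \<in> seq_prods G T2" "h \<in> seq_prods G T2"
      using gen_seq by blast
    have hc: "h \<in> carrier G" using insert.prems DNc by auto
    have "\<one> \<otimes> \<one> \<in> seq_prods G (T1 + T2)" using seq_prods_add T1 T2 by blast
    moreover have "\<one> \<otimes> h \<in> seq_prods G (T1 + T2)" using seq_prods_add T1 T2 by blast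
    moreover have "g \<otimes> \<one> \<in> seq_prods G (T1 + T2)" if "g \<in> F" for g
      using seq_prods_add T1 T2 that by blast
    moreover have "F \<subseteq> carrier G" using insert.prems DNc by auto
    ultimately have "\<one> \<in> seq_prods G (T1 + T2) \<and> insert h F \<subseteq> seq_prods G (T1 + T2)"
      using hc by (auto simp: subset_iff)
    then show ?case using seqs_add[OF T1(1) T2(1)] by blast
  qed
  moreover have "finite DN" using fin DNc finite_subset by blast
  ultimately obtain T where T: "T \<in> seqs (carrier G)" "\<one> \<in> seq_prods G T" "DN \<subseteq> seq_prods G T" by blast
  obtain v where v: "mset v = T" "lprod G v = \<one>" using T(2) by (metis seq_prodsE)
  have "y \<in> DN" if ym: "y \<in> seq_prods G T" for y
  proof -
    obtain u where u: "mset u = T" "lprod G u = y" using seq_prodsE[OF ym] by metis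
    have "\<one> \<in> DN" using subgroup.one_closed[OF normal_imp_subgroup[OF DN_normal]] .
    then show ?thesis using perm_DN'[of v u] v u seqs_set[OF T(1)] by auto
  qed
  then show ?thesis using T by blast
qed

end

theorem lemma3p7:
  fixes G (structure) and S :: "'a multiset"
  assumes "group G" and "finite (carrier G)" and "S \<in> seqs (carrier G)"
  shows "(seq_class G S \<in> class_idems G \<longrightarrow>
            subgroup (seq_prods G S) G \<and> seq_prods G S \<subseteq> derived G (carrier G))
       \<and> seq_class G {#} = prod_one_seqs G (grp_center G)
       \<and> (\<forall>g \<in> grp_center G. seq_equiv G (replicate_mset (group.ord G g) g) {#})
       \<and> ((seq_class G S \<in> class_idems G \<and>
             (\<forall>f \<in> class_idems G. rees_le G (seq_class G S) f))
           \<longleftrightarrow> seq_prods G S = derived G (carrier G))"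
proof -
  interpret group G by (rule assms(1))
  note fin = assms(2) and S = assms(3)
  have P1: "seq_class G S \<in> class_idems G \<Longrightarrow> subgroup (seq_prods G S) G \<and> seq_prods G S \<subseteq> DN"
    using part1[OF S fin] idem_iff[OF S] by blast
  have P3: "(seq_class G S \<in> class_idems G \<and> (\<forall>f \<in> class_idems G. rees_le G (seq_class G S) f))
           \<longleftrightarrow> seq_prods G S = DN"
  proof
    assume A: "seq_class G S \<in> class_idems G \<and> (\<forall>f \<in> class_idems G. rees_le G (seq_class G S) f)"
    then have sg: "subgroup (seq_prods G S) G" and sub: "seq_prods G S \<subseteq> DN" using P1 by auto
    obtain T where T: "T \<in> seqs (carrier G)" "seq_prods G T = DN" using big_seq[OF fin] by blast
    have "seq_equiv G (T + T) T" using absorbDN[OF T T(1)] T(2) by simp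
    then have "seq_class G T \<in> class_idems G" using idem_iff[OF T(1)] by simp
    then have "rees_le G (seq_class G S) (seq_class G T)" using A by blast
    then have "seq_class G (S + T) = seq_class G S" unfolding rees_le_def using class_add_eq[OF S T(1)] by simp
    then have E: "seq_equiv G (S + T) S" using seq_class_eqD[OF S] by blast
    have "h \<in> seq_prods G S" if h: "h \<in> DN" for h
    proof -
      have hc: "h \<in> carrier G" using h derived_in_carrier by blast
      have ih: "inv h \<in> carrier G" using hc by simp
      have U: "{#inv h#} \<in> seqs (carrier G)" using ih unfolding seqs_def by auto
      have "\<one> \<otimes> h \<in> seq_prods G (S + T)"
        using seq_prods_add[OF S T(1) subgroup.one_closed[OF sg]] h T(2) by blast
      moreover have "inv h \<in> seq_prods G {#inv h#}" by (rule seq_prodsI[of "[inv h]"]) (auto simp: ih)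
      ultimately have "(\<one> \<otimes> h) \<otimes> inv h \<in> seq_prods G (S + T + {#inv h#})"
        using seq_prods_add[OF seqs_add[OF S T(1)] U] by blast
      then have "\<one> \<in> seq_prods G (S + T + {#inv h#})" using hc by simp
      then have "S + T + {#inv h#} \<in> prod_one_seqs G (carrier G)"
        using prod_one_iff seqs_add[OF seqs_add[OF S T(1)] U] by blast
      then have "S + {#inv h#} \<in> prod_one_seqs G (carrier G)" using E U unfolding seq_equiv_def by blast
      then have "\<one> \<in> seq_prods G (S + {#inv h#})" unfolding prod_one_seqs_def by auto
      then have "inv (inv h) \<in> seq_prods G S" using rot_seq[OF S ih] by blast
      then show ?thesis using hc by simp
    qed
    then show "seq_prods G S = DN" using sub by blast
  next
    assume SD: "seq_prods G S = DN"
    have "seq_equiv G (S + S) S" using absorbDN[OF S SD S] SD by simp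
    then have I: "seq_class G S \<in> class_idems G" using idem_iff[OF S] by simp
    have "rees_le G (seq_class G S) f" if f: "f \<in> class_idems G" for f
    proof -
      obtain T where T: "T \<in> seqs (carrier G)" "f = seq_class G T" "seq_equiv G (T + T) T"
        using idems_form[OF f] by blast
      have "seq_prods G T \<subseteq> DN" using part1[OF T(1) fin T(3)] by blast
      then have "seq_equiv G (S + T) S" using absorbDN[OF S SD T(1)] by blast
      then show ?thesis unfolding rees_le_def T(2) class_add_eq[OF S T(1)] using seq_class_eq by blast
    qed
    then show "seq_class G S \<in> class_idems G \<and> (\<forall>f \<in> class_idems G. rees_le G (seq_class G S) f)"
      using I by blast
  qed
  show ?thesis using P1 P3 part2a[OF fin] part2b[OF fin] by blast
qed


end
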